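(* Let $p>1$, fix a choice of sign $\pm$, and let $f\in C_0^2(\mathbb{R})$, $g\in C_0^1(\mathbb{R})$ satisfy $\pm f'(x_0)+g(x_0)\neq0$ for some $x_0\in\mathbb{R}$ (same sign as in the equation below). Consider \[ \begin{cases} u_{tt}-u_{xx}=|u_t\pm u_x|^{p-1}(u_t\pm u_x) & \text{in } \mathbb{R}\times(0,T),\\ u(x,0)=\varepsilon f(x),\quad u_t(x,0)=\varepsilon g(x), & x\in\mathbb{R}, \end{cases} \] with $\varepsilon>0$. Then there exists a constant $C>0$ independent of $\varepsilon$ (one may take $C=|\pm f'(x_0)+g(x_0)|^{1-p}/(p-1)$) such that for every $\varepsilon>0$, no classical solution on $\mathbb{R}\times[0,T]$ exists if $T>C\varepsilon^{-(p-1)}$. Consequently the lifespan satisfies $T(\varepsilon)\le C\varepsilon^{-(p-1)}$.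
   Context: The lifespan $T(\varepsilon)$ is the supremum of all $T>0$ such that a classical solution of the problem exists on $\mathbb{R}\times[0,T]$ for the fixed data $(f,g)$. *)

theory Defs
  imports "HOL-Analysis.Analysis"
begin

definition compact_support :: "(real \<Rightarrow> real) \<Rightarrow> bool" where
  "compact_support h \<longleftrightarrow> compact (closure {x. h x \<noteq> 0})"

definition C0_1 :: "(real \<Rightarrow> real) \<Rightarrow> bool" where
  "C0_1 h \<longleftrightarrow> (\<forall>x. h differentiable (at x)) \<and> continuous_on UNIV (deriv h)
      \<and> compact_support h"

definition C0_2 :: "(real \<Rightarrow> real) \<Rightarrow> bool" where
  "C0_2 h \<longleftrightarrow> (\<forall>x. h differentiable (at x)) \<and> (\<forall>x. deriv h differentiable (at x))
      \<and> continuous_on UNIV (deriv (deriv h)) \<and> compact_support h"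

definition classical_solution ::
  "real \<Rightarrow> real \<Rightarrow> (real \<Rightarrow> real) \<Rightarrow> (real \<Rightarrow> real) \<Rightarrow> real \<Rightarrow> real
     \<Rightarrow> (real \<Rightarrow> real \<Rightarrow> real) \<Rightarrow> bool" where
  "classical_solution p s f g \<epsilon> T u \<longleftrightarrow> T > 0 \<and>
    (\<exists>ux ut uxx uxt utt :: real \<Rightarrow> real \<Rightarrow> real.
      (\<forall>v \<in> {u, ux, ut, uxx, uxt, utt}. continuous_on (UNIV \<times> {0..T}) (\<lambda>(x, t). v x t)) \<and>
      (\<forall>x. \<forall>t \<in> {0..T}.
         ((\<lambda>y. u y t) has_real_derivative ux x t) (at x) \<and>
         ((\<lambda>\<tau>. u x \<tau>) has_real_derivative ut x t) (at t within {0..T}) \<and>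
         ((\<lambda>y. ux y t) has_real_derivative uxx x t) (at x) \<and>
         ((\<lambda>y. ut y t) has_real_derivative uxt x t) (at x) \<and>
         ((\<lambda>\<tau>. ux x \<tau>) has_real_derivative uxt x t) (at t within {0..T}) \<and>
         ((\<lambda>\<tau>. ut x \<tau>) has_real_derivative utt x t) (at t within {0..T})) \<and>
      (\<forall>x. \<forall>t \<in> {0<..<T}.
         utt x t - uxx x t = \<bar>ut x t + s * ux x t\<bar> powr (p - 1) * (ut x t + s * ux x t)) \<and>
      (\<forall>x. u x 0 = \<epsilon> * f x \<and> ut x 0 = \<epsilon> * g x))"

end

theory Submission imports Defs begin
lemma char_deriv:
  fixes v vx vt :: "real \<Rightarrow> real \<Rightarrow> real"
  assumes cont: "continuous_on (UNIV \<times> {0..T}) (\<lambda>(x,t). vt x t)"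
    and dx: "\<forall>x. \<forall>t\<in>{0..T}. ((\<lambda>y. v y t) has_real_derivative vx x t) (at x)"
    and dt: "\<forall>x. \<forall>t\<in>{0..T}. ((\<lambda>\<tau>. v x \<tau>) has_real_derivative vt x t) (at t within {0..T})"
    and t: "t \<in> {0..T}"
  shows "((\<lambda>\<tau>. v (a - s*\<tau>) \<tau>) has_real_derivative (vt (a - s*t) t - s * vx (a - s*t) t)) (at t within {0..T})"
proof -
  define x0 where "x0 = a - s*t"
  have H: "((\<lambda>(x,y). v x y) has_derivative (\<lambda>(tx,ty). tx * vx x0 t + blinfun_mult_left (vt x0 t) ty)) (at (x0,t) within UNIV \<times> {0..T})"
  proof (rule has_derivative_partialsI)
    show "((\<lambda>x. v x t) has_derivative (\<lambda>h. h * vx x0 t)) (at x0 within UNIV)"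
      using dx t by (simp add: has_real_derivative_iff_has_vector_derivative has_vector_derivative_def mult.commute)
    show "\<And>x y. x \<in> UNIV \<Longrightarrow> y \<in> {0..T} \<Longrightarrow> ((\<lambda>y. v x y) has_derivative blinfun_apply (blinfun_mult_left (vt x y))) (at y within {0..T})"
      using dt by (simp add: has_field_derivative_def mult_commute_abs)
    have "continuous_on (UNIV \<times> {0..T}) (\<lambda>(x, y). blinfun_mult_left (vt x y))"
      using continuous_on_compose[OF cont, of blinfun_mult_left]
      by (simp add: split_beta' o_def bounded_linear.continuous_on[OF bounded_linear_blinfun_mult_left] continuous_on_id)
    then show "continuous (at (x0, t) within UNIV \<times> {0..T}) (\<lambda>(x, y). blinfun_mult_left (vt x y))"
      using t by (simp add: continuous_on_eq_continuous_within)
  qed (use t in auto)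
  have P: "((\<lambda>\<tau>. (a - s*\<tau>, \<tau>)) has_derivative (\<lambda>h. (-s*h, h))) (at t within {0..T})"
    by (auto intro!: derivative_eq_intros)
  have H2: "((\<lambda>(x,y). v x y) has_derivative (\<lambda>(tx,ty). tx * vx x0 t + blinfun_mult_left (vt x0 t) ty)) (at (x0, t) within (\<lambda>\<tau>. (a - s*\<tau>, \<tau>)) ` {0..T})"
    by (rule has_derivative_subset[OF H]) auto
  have "(((\<lambda>(x,y). v x y) \<circ> (\<lambda>\<tau>. (a - s*\<tau>, \<tau>))) has_derivative ((\<lambda>(tx,ty). tx * vx x0 t + blinfun_mult_left (vt x0 t) ty) \<circ> (\<lambda>h. (-s*h, h)))) (at t within {0..T})"
    using diff_chain_within[OF P] H2 by (simp add: x0_def)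
  moreover have "((\<lambda>(x,y). v x y) \<circ> (\<lambda>\<tau>. (a - s*\<tau>, \<tau>))) = (\<lambda>\<tau>. v (a - s*\<tau>) \<tau>)"
    by (auto simp: o_def)
  moreover have "((\<lambda>(tx,ty). tx * vx x0 t + blinfun_mult_left (vt x0 t) ty) \<circ> (\<lambda>h. (-s*h, h))) = (*) (vt (a - s*t) t - s * vx (a - s*t) t)"
    by (auto simp: o_def x0_def algebra_simps)
  ultimately show ?thesis
    unfolding has_field_derivative_def by simp
qed

lemma ode_pos:
  fixes W :: "real \<Rightarrow> real"
  assumes p: "p > 1" and T: "T > 0" and contW: "continuous_on {0..T} W"
    and der: "\<And>t. t\<in>{0<..<T} \<Longrightarrow> (W has_real_derivative (\<bar>W t\<bar> powr (p-1) * W t)) (at t)"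
    and a: "W 0 > 0"
  shows "(p-1) * T < W 0 powr (1-p)"
proof -
  define a where "a = W 0"
  have pos: "W t > a/2" if t: "t \<in> {0..T}" for t
  proof (rule ccontr)
    assume "\<not> W t > a/2"
    define K where "K = {t\<in>{0..T}. W t \<le> a/2}"
    have "closed K" unfolding K_def
      using continuous_closed_preimage[OF contW closed_atLeastAtMost, of "{..a/2}"]
      by (simp add: vimage_def Int_def conj_commute)
    moreover have "bounded K" unfolding K_def by (rule bounded_subset[of "{0..T}"]) auto
    ultimately have cK: "compact K" by (simp add: compact_eq_bounded_closed)
    have "t \<in> K" using t \<open>\<not> W t > a/2\<close> unfolding K_def by simp
    hence "K \<noteq> {}" by blast
    then obtain t1 where t1: "t1 \<in> K" "\<And>y. y \<in> K \<Longrightarrow> t1 \<le> y"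
      using compact_attains_inf[OF cK] by auto
    have t1T: "0 \<le> t1" "t1 \<le> T" "W t1 \<le> a/2" using t1 by (auto simp: K_def)
    have "t1 \<noteq> 0" using t1T a by (auto simp: a_def)
    hence t10: "0 < t1" using t1T by simp
    have below: "W y > a/2" if "0 \<le> y" "y < t1" for y
      using t1(2)[of y] that t1T by (force simp: K_def)
    have "continuous_on {0..t1} W" using t1T by (intro continuous_on_subset[OF contW]) auto
    moreover have "\<And>x. 0 < x \<Longrightarrow> x < t1 \<Longrightarrow> W differentiable (at x)"
      using der t1T real_differentiable_def by (metis greaterThanLessThan_iff order_less_le_trans)
    ultimately obtain l z where z: "0 < z" "z < t1" "(W has_real_derivative l) (at z)" "W t1 - W 0 = (t1 - 0) * l"
      using MVT[OF t10] by blast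
    have "(W has_real_derivative (\<bar>W z\<bar> powr (p-1) * W z)) (at z)"
      using der z t1T by auto
    hence "l = \<bar>W z\<bar> powr (p-1) * W z" using z(3) DERIV_unique by blast
    moreover have "W z > 0" using below[of z] z a by (simp add: a_def)
    ultimately have "l > 0" by simp
    hence "t1 * l > 0" using t10 by simp
    hence "W t1 > W 0" using z(4) by simp
    thus False using t1T a by (simp add: a_def)
  qed
  define G where "G t = W t powr (1-p) + (p-1)*t" for t
  have pos': "W t \<noteq> 0" if "t \<in> {0..T}" for t
    using pos[OF that] a by (simp add: a_def)
  have contG: "continuous_on {0..T} G" unfolding G_def
    using pos' by (auto intro!: continuous_intros contW)
  have "G T = G 0"
  proof (rule DERIV_isconst_end[OF T contG])
    fix x assume x: "0 < x" "x < T"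
    have Wx: "W x > 0" using pos[of x] x a by (simp add: a_def)
    have dW: "(W has_real_derivative (\<bar>W x\<bar> powr (p-1) * W x)) (at x)" using der x by auto
    have "(G has_real_derivative ((1-p) * W x powr (1-p-1) * (\<bar>W x\<bar> powr (p-1) * W x) + (p-1))) (at x)"
      unfolding G_def
      using DERIV_add[OF DERIV_fun_powr[OF dW Wx, of "1-p"] DERIV_cmult[OF DERIV_ident, of "p-1"]]
      by simp
    moreover have "(1-p) * W x powr (1-p-1) * (\<bar>W x\<bar> powr (p-1) * W x) + (p-1) = 0"
    proof -
      have "W x powr (1-p-1) * (\<bar>W x\<bar> powr (p-1) * W x) = W x powr (1-p-1) * W x powr (p-1) * W x powr 1"
        using Wx by simp
      also have "\<dots> = W x powr ((1-p-1) + (p-1) + 1)"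
        by (simp only: powr_add)
      also have "\<dots> = 1" using Wx by simp
      finally show ?thesis by (simp add: algebra_simps)
    qed
    ultimately show "(G has_real_derivative 0) (at x)" by simp
  qed
  moreover have "W T powr (1-p) > 0" using pos[of T] T a by (simp add: a_def)
  ultimately show ?thesis unfolding G_def by linarith
qed

theorem theorem4p1:
  fixes p s :: real and f g :: "real \<Rightarrow> real" and x0 :: real
  assumes "p > 1"
    and "s = 1 \<or> s = -1"
    and "C0_2 f" and "C0_1 g"
    and "s * deriv f x0 + g x0 \<noteq> 0"
  shows "\<exists>C > 0. \<forall>\<epsilon> > 0. \<forall>T. T > C * \<epsilon> powr (-(p - 1)) \<longrightarrow>
           \<not> (\<exists>u. classical_solution p s f g \<epsilon> T u)"
proof -
  define c where "c = s * deriv f x0 + g x0"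
  have c0: "c \<noteq> 0" using assms(5) by (simp add: c_def)
  define C where "C = \<bar>c\<bar> powr (1-p) / (p-1)"
  have Cpos: "C > 0" using c0 assms(1) by (simp add: C_def)
  have fd: "(f has_real_derivative deriv f x0) (at x0)"
    using assms(3) unfolding C0_2_def by (simp add: DERIV_deriv_iff_real_differentiable)
  show ?thesis
  proof (intro exI[of _ C] conjI Cpos allI impI notI)
    fix \<epsilon> T :: real
    assume e: "\<epsilon> > 0" and TC: "T > C * \<epsilon> powr (-(p - 1))"
    assume "\<exists>u. classical_solution p s f g \<epsilon> T u"
    then obtain u ux ut uxx uxt utt where T0: "T > 0"
      and cont: "\<forall>v \<in> {u, ux, ut, uxx, uxt, utt}. continuous_on (UNIV \<times> {0..T}) (\<lambda>(x, t). v x t)"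
      and D: "\<forall>x. \<forall>t \<in> {0..T}.
         ((\<lambda>y. u y t) has_real_derivative ux x t) (at x) \<and>
         ((\<lambda>\<tau>. u x \<tau>) has_real_derivative ut x t) (at t within {0..T}) \<and>
         ((\<lambda>y. ux y t) has_real_derivative uxx x t) (at x) \<and>
         ((\<lambda>y. ut y t) has_real_derivative uxt x t) (at x) \<and>
         ((\<lambda>\<tau>. ux x \<tau>) has_real_derivative uxt x t) (at t within {0..T}) \<and>
         ((\<lambda>\<tau>. ut x \<tau>) has_real_derivative utt x t) (at t within {0..T})"
      and E: "\<forall>x. \<forall>t \<in> {0<..<T}.
         utt x t - uxx x t = \<bar>ut x t + s * ux x t\<bar> powr (p - 1) * (ut x t + s * ux x t)"
      and I: "\<forall>x. u x 0 = \<epsilon> * f x \<and> ut x 0 = \<epsilon> * g x"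
      unfolding classical_solution_def by blast
    define W where "W \<tau> = ut (x0 - s*\<tau>) \<tau> + s * ux (x0 - s*\<tau>) \<tau>" for \<tau>
    have contW: "continuous_on {0..T} W"
    proof -
      have P: "continuous_on {0..T} (\<lambda>\<tau>::real. (x0 - s*\<tau>, \<tau>))" by (intro continuous_intros)
      have im: "(\<lambda>\<tau>::real. (x0 - s*\<tau>, \<tau>)) ` {0..T} \<subseteq> UNIV \<times> {0..T}" by auto
      have "continuous_on (UNIV \<times> {0..T}) (\<lambda>(x, t). ut x t)" using cont by auto
      from continuous_on_compose2[OF this P im]
      have c1: "continuous_on {0..T} (\<lambda>\<tau>. ut (x0 - s*\<tau>) \<tau>)" by simp
      have "continuous_on (UNIV \<times> {0..T}) (\<lambda>(x, t). ux x t)" using cont by auto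
      from continuous_on_compose2[OF this P im]
      have c2: "continuous_on {0..T} (\<lambda>\<tau>. ux (x0 - s*\<tau>) \<tau>)" by simp
      show ?thesis unfolding W_def using c1 c2 by (auto intro!: continuous_intros)
    qed
    have dW: "(W has_real_derivative (\<bar>W t\<bar> powr (p-1) * W t)) (at t)" if t: "t \<in> {0<..<T}" for t
    proof -
      have tt: "t \<in> {0..T}" using t by auto
      have cutt: "continuous_on (UNIV \<times> {0..T}) (\<lambda>(x,t). utt x t)"
        and cuxt: "continuous_on (UNIV \<times> {0..T}) (\<lambda>(x,t). uxt x t)" using cont by auto
      note d1 = char_deriv[OF cutt, of ut uxt, OF _ _ tt, of x0 s]
      note d2 = char_deriv[OF cuxt, of ux uxx, OF _ _ tt, of x0 s]
      have "(W has_real_derivative ((utt (x0 - s*t) t - s * uxt (x0 - s*t) t) + s * (uxt (x0 - s*t) t - s * uxx (x0 - s*t) t))) (at t within {0..T})"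
        unfolding W_def using D by (intro DERIV_add DERIV_cmult d1 d2) auto
      moreover have "at t within {0..T} = at t" using t by (intro at_within_Icc_at) auto
      moreover have "(utt (x0 - s*t) t - s * uxt (x0 - s*t) t) + s * (uxt (x0 - s*t) t - s * uxx (x0 - s*t) t)
          = utt (x0 - s*t) t - uxx (x0 - s*t) t"
        using assms(2) by (auto simp: algebra_simps)
      moreover have "utt (x0 - s*t) t - uxx (x0 - s*t) t = \<bar>W t\<bar> powr (p-1) * W t"
        using E t by (simp add: W_def)
      ultimately show ?thesis by simp
    qed
    have W0: "W 0 = \<epsilon> * c"
    proof -
      have "((\<lambda>y. u y 0) has_real_derivative ux x0 0) (at x0)" using D T0 by auto
      moreover have "((\<lambda>y. u y 0) has_real_derivative \<epsilon> * deriv f x0) (at x0)"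
        using I DERIV_cmult[OF fd, of \<epsilon>] by simp
      ultimately have "ux x0 0 = \<epsilon> * deriv f x0" by (rule DERIV_unique)
      then show ?thesis using I by (simp add: W_def c_def algebra_simps)
    qed
    define \<sigma> where "\<sigma> = sgn c"
    have sig: "\<sigma> = 1 \<or> \<sigma> = -1" using c0 by (auto simp: \<sigma>_def sgn_if)
    define V where "V \<tau> = \<sigma> * W \<tau>" for \<tau>
    have contV: "continuous_on {0..T} V" unfolding V_def by (intro continuous_intros contW)
    have dV: "(V has_real_derivative (\<bar>V t\<bar> powr (p-1) * V t)) (at t)" if t: "t \<in> {0<..<T}" for t
    proof -
      have "(V has_real_derivative \<sigma> * (\<bar>W t\<bar> powr (p-1) * W t)) (at t)"
        unfolding V_def by (intro DERIV_cmult dW t)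
      moreover have "\<bar>V t\<bar> = \<bar>W t\<bar>" using sig by (auto simp: V_def)
      ultimately show ?thesis by (simp add: V_def algebra_simps)
    qed
    have V0: "V 0 = \<epsilon> * \<bar>c\<bar>" using W0 by (simp add: V_def \<sigma>_def abs_sgn mult.left_commute sgn_mult_abs)
    have "V 0 > 0" using V0 e c0 by simp
    from ode_pos[OF assms(1) T0 contV dV this]
    have "(p-1) * T < (\<epsilon> * \<bar>c\<bar>) powr (1-p)" using V0 by simp
    also have "\<dots> = \<epsilon> powr (1-p) * \<bar>c\<bar> powr (1-p)" using e by (simp add: powr_mult)
    also have "\<dots> = (p-1) * (C * \<epsilon> powr (-(p - 1)))" using assms(1) by (simp add: C_def)
    finally have "T < C * \<epsilon> powr (-(p - 1))" using assms(1) by simp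
    then show False using TC by simp
  qed
qed
end
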